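(* Let $\Omega\subset\mathbb{Z}_2^m\setminus\{\mathbf 0\}$ be nonempty with every tuple of odd Hamming weight, and let $\Omega'\subset\mathbb{Z}_2^n\setminus\{\mathbf 0\}$ be nonempty. Let $k=\min_{\beta\in\Omega}s(\beta)$ and $\Omega^*=\{\beta\in\Omega: s(\beta)=k\}$. If $\sum_{\beta\in\Omega^*}\beta\neq\mathbf 0$ in $\mathbb{Z}_2^m$ or $\sum_{\beta\in\Omega'}\beta\neq\mathbf 0$ in $\mathbb{Z}_2^n$, then the Cartesian product $\mathrm{NEPS}(P_3,\ldots,P_3;\Omega)\,\square\,\mathrm{NEPS}(P_2,\ldots,P_2;\Omega')$ exhibits pretty good state transfer between some pair of distinct vertices.
   Context: $P_m$ denotes the path on $m$ vertices. For graphs $G_1,\dots,G_n$ and $\Omega\subset\mathbb{Z}_2^n\setminus\{\mathbf 0\}$, $\mathrm{NEPS}(G_1,\dots,G_n;\Omega)$ is the graph on $V(G_1)\times\cdots\times V(G_n)$ in which $(x_1,\dots,x_n)$ and $(y_1,\dots,y_n)$ are adjacent iff there is $\beta\in\Omega$ with $x_i=y_i$ whenever $\beta_i=0$ and $x_i$ adjacent to $y_i$ in $G_i$ whenever $\beta_i=1$; its adjacency matrix is $\sum_{\beta\in\Omega}A_1^{\beta_1}\otimes\cdots\otimes A_n^{\beta_n}$. The Hamming weight $s(\beta)$ is the number of entries of $\beta$ equal to $1$. The Cartesian product $G\square G'$ has vertex set $V(G)\times V(G')$ with $(a,b)\sim(c,d)$ iff either $a\sim c$ and $b=d$, or $a=c$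 and $b\sim d$. The transition matrix of a graph with adjacency matrix $A$ is $H(t)=\exp(-itA)$; a graph has pretty good state transfer between vertices $x,y$ if for every $\epsilon>0$ there is $t\in\mathbb R$ with $\big||e_x^TH(t)e_y|-1\big|<\epsilon$. *)

theory Defs
  imports "HOL-Analysis.Analysis"
begin

definition path_adj :: "nat \<Rightarrow> nat \<Rightarrow> nat \<Rightarrow> bool" where
  "path_adj k i j \<longleftrightarrow> i < k \<and> j < k \<and> (i = j + 1 \<or> j = i + 1)"

text \<open>Elements of Z_2^m are boolean lists of length m.\<close>
definition hamming :: "bool list \<Rightarrow> nat" where
  "hamming \<beta> = length (filter id \<beta>)"

definition z2_sum :: "nat \<Rightarrow> bool list set \<Rightarrow> bool list" where
  "z2_sum m S = map (\<lambda>i. odd (card {\<beta>\<in>S. \<beta> ! i})) [0..<m]"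

definition z2_zero :: "nat \<Rightarrow> bool list" where
  "z2_zero m = replicate m False"

definition neps_verts :: "nat \<Rightarrow> nat \<Rightarrow> nat list set" where
  "neps_verts k m = {xs. length xs = m \<and> (\<forall>a\<in>set xs. a < k)}"

definition neps_adj :: "(nat \<Rightarrow> nat \<Rightarrow> bool) \<Rightarrow> bool list set \<Rightarrow> nat list \<Rightarrow> nat list \<Rightarrow> bool" where
  "neps_adj G \<Omega> x y \<longleftrightarrow> (\<exists>\<beta>\<in>\<Omega>. \<forall>i<length \<beta>.
      (\<not> \<beta> ! i \<longrightarrow> x ! i = y ! i) \<and> (\<beta> ! i \<longrightarrow> G (x ! i) (y ! i)))"

definition cart_adj :: "('a \<Rightarrow> 'a \<Rightarrow> bool) \<Rightarrow> ('b \<Rightarrow> 'b \<Rightarrow> bool) \<Rightarrow> 'a \<times> 'b \<Rightarrow> 'a \<times> 'b \<Rightarrow> bool" where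
  "cart_adj E E' u v \<longleftrightarrow> (E (fst u) (fst v) \<and> snd u = snd v) \<or> (fst u = fst v \<and> E' (snd u) (snd v))"

fun adj_pow :: "'a set \<Rightarrow> ('a \<Rightarrow> 'a \<Rightarrow> bool) \<Rightarrow> nat \<Rightarrow> 'a \<Rightarrow> 'a \<Rightarrow> real" where
  "adj_pow V E 0 x y = (if x = y then 1 else 0)"
| "adj_pow V E (Suc k) x y = (\<Sum>z\<in>V. (if E x z then 1 else 0) * adj_pow V E k z y)"

text \<open>Entry (x,y) of the transition matrix H(t) = exp(-itA), via the exponential series.\<close>
definition transition :: "'a set \<Rightarrow> ('a \<Rightarrow> 'a \<Rightarrow> bool) \<Rightarrow> real \<Rightarrow> 'a \<Rightarrow> 'a \<Rightarrow> complex" where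
  "transition V E t x y = (\<Sum>k. (- \<i> * complex_of_real t) ^ k / of_nat (fact k) * complex_of_real (adj_pow V E k x y))"

definition pgst :: "'a set \<Rightarrow> ('a \<Rightarrow> 'a \<Rightarrow> bool) \<Rightarrow> 'a \<Rightarrow> 'a \<Rightarrow> bool" where
  "pgst V E x y \<longleftrightarrow> (\<forall>\<epsilon>>0. \<exists>t::real. \<bar>cmod (transition V E t x y) - 1\<bar> < \<epsilon>)"

end

theory Submission
  imports Defs "HOL-Analysis.Kronecker_Approximation_Theorem" "HOL-Computational_Algebra.Primes"
begin


lemma adj_pow_spectral:
  assumes fin: "finite V" and finJ: "finite J"
    and compl: "\<And>x y. x \<in> V \<Longrightarrow> y \<in> V \<Longrightarrow> (\<Sum>j\<in>J. P j x y) = (if x = y then 1 else 0)"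
    and eig: "\<And>j x y. j \<in> J \<Longrightarrow> x \<in> V \<Longrightarrow> y \<in> V \<Longrightarrow>
        (\<Sum>z\<in>V. (if E x z then 1 else 0) * P j z y) = lam j * P j x y"
  shows "x \<in> V \<Longrightarrow> y \<in> V \<Longrightarrow> adj_pow V E k x y = (\<Sum>j\<in>J. lam j ^ k * P j x y)"
proof (induction k arbitrary: x)
  case 0
  then show ?case using compl by simp
next
  case (Suc k)
  have "adj_pow V E (Suc k) x y = (\<Sum>z\<in>V. (if E x z then 1 else 0) * (\<Sum>j\<in>J. lam j ^ k * P j z y))"
    using Suc by simp
  also have "\<dots> = (\<Sum>j\<in>J. lam j ^ k * (\<Sum>z\<in>V. (if E x z then 1 else 0) * P j z y))"
    by (simp add: sum_distrib_left sum_distrib_right mult_ac sum.swap[of _ V])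
  also have "\<dots> = (\<Sum>j\<in>J. lam j ^ Suc k * P j x y)"
    using eig Suc.prems by (intro sum.cong) auto
  finally show ?case .
qed

lemma transition_spectral:
  assumes fin: "finite V" and finJ: "finite J"
    and compl: "\<And>x y. x \<in> V \<Longrightarrow> y \<in> V \<Longrightarrow> (\<Sum>j\<in>J. P j x y) = (if x = y then 1 else 0)"
    and eig: "\<And>j x y. j \<in> J \<Longrightarrow> x \<in> V \<Longrightarrow> y \<in> V \<Longrightarrow>
        (\<Sum>z\<in>V. (if E x z then 1 else 0) * P j z y) = lam j * P j x y"
    and xy: "x \<in> V" "y \<in> V"
  shows "transition V E t x y = (\<Sum>j\<in>J. cis (- (t * lam j)) * complex_of_real (P j x y))"
proof -
  have s: "(\<lambda>k. \<Sum>j\<in>J. complex_of_real (P j x y) * ((- \<i> * complex_of_real (t * lam j)) ^ k /\<^sub>R fact k))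
     sums (\<Sum>j\<in>J. complex_of_real (P j x y) * exp (- \<i> * complex_of_real (t * lam j)))"
    by (intro sums_sum sums_mult exp_converges)
  have pw: "(- (\<i> * (complex_of_real t * c))) ^ k = c ^ k * (- (\<i> * complex_of_real t)) ^ k" for c k
  proof -
    have "- (\<i> * (complex_of_real t * c)) = c * (- (\<i> * complex_of_real t))" by simp
    then show ?thesis by (simp only: power_mult_distrib)
  qed
  have eq: "(- \<i> * complex_of_real t) ^ k / of_nat (fact k) * complex_of_real (adj_pow V E k x y)
     = (\<Sum>j\<in>J. complex_of_real (P j x y) * ((- \<i> * complex_of_real (t * lam j)) ^ k /\<^sub>R fact k))" for k
    by (simp add: adj_pow_spectral[OF assms(1-4) xy] sum_distrib_left power_mult_distrib
        scaleR_conv_of_real mult_ac divide_inverse)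
       (intro sum.cong refl, simp add: pw)
  have "transition V E t x y = (\<Sum>j\<in>J. complex_of_real (P j x y) * exp (- \<i> * complex_of_real (t * lam j)))"
    unfolding transition_def eq using s by (rule sums_unique[symmetric])
  also have "\<dots> = (\<Sum>j\<in>J. cis (- (t * lam j)) * complex_of_real (P j x y))"
    by (intro sum.cong) (auto simp: cis_conv_exp mult_ac)
  finally show ?thesis .
qed



lemma neps_verts_Suc: "neps_verts k (Suc m) = (\<lambda>(c,z). c # z) ` ({..<k} \<times> neps_verts k m)"
proof (rule set_eqI)
  fix xs show "xs \<in> neps_verts k (Suc m) \<longleftrightarrow> xs \<in> (\<lambda>(c,z). c # z) ` ({..<k} \<times> neps_verts k m)"
    by (cases xs) (auto simp: neps_verts_def image_iff)
qed

lemma finite_neps_verts: "finite (neps_verts k m)"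
proof -
  have "neps_verts k m = {xs. set xs \<subseteq> {..<k} \<and> length xs = m}"
    by (auto simp: neps_verts_def)
  then show ?thesis using finite_lists_length_eq[of "{..<k}" m] by simp
qed

lemma sum_prod_lists:
  "(\<Sum>z\<in>neps_verts k m. \<Prod>i<m. f i (z!i)) = (\<Prod>i<m. \<Sum>c<k. (f i c :: 'a::comm_semiring_1))"
proof (induction m arbitrary: f)
  case 0
  have "neps_verts k 0 = {[]}" by (auto simp: neps_verts_def)
  then show ?case by simp
next
  case (Suc m)
  have inj: "inj_on (\<lambda>(c,z). c # z) ({..<k} \<times> neps_verts k m)"
    by (auto simp: inj_on_def)
  have "(\<Sum>z\<in>neps_verts k (Suc m). \<Prod>i<Suc m. f i (z!i))
      = (\<Sum>(c,z)\<in>{..<k} \<times> neps_verts k m. \<Prod>i<Suc m. f i ((c#z)!i))"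
    unfolding neps_verts_Suc by (subst sum.reindex[OF inj]) (simp add: case_prod_unfold)
  also have "\<dots> = (\<Sum>(c,z)\<in>{..<k} \<times> neps_verts k m. f 0 c * (\<Prod>i<m. f (Suc i) (z!i)))"
    by (intro sum.cong refl) (auto simp: prod.lessThan_Suc_shift simp del: prod.lessThan_Suc)
  also have "\<dots> = (\<Sum>c<k. f 0 c) * (\<Sum>z\<in>neps_verts k m. \<Prod>i<m. f (Suc i) (z!i))"
    by (simp add: sum.cartesian_product[symmetric] sum_product)
  also have "\<dots> = (\<Sum>c<k. f 0 c) * (\<Prod>i<m. \<Sum>c<k. f (Suc i) c)"
    using Suc.IH[of "\<lambda>i. f (Suc i)"] by simp
  also have "\<dots> = (\<Prod>i<Suc m. \<Sum>c<k. f i c)"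
    by (simp add: prod.lessThan_Suc_shift del: prod.lessThan_Suc)
  finally show ?case .
qed



definition PN :: "(nat \<Rightarrow> nat \<Rightarrow> nat \<Rightarrow> real) \<Rightarrow> nat \<Rightarrow> nat list \<Rightarrow> nat list \<Rightarrow> nat list \<Rightarrow> real" where
  "PN p m a x w = (\<Prod>i<m. p (a!i) (x!i) (w!i))"

definition LN :: "(nat \<Rightarrow> real) \<Rightarrow> bool list set \<Rightarrow> nat \<Rightarrow> nat list \<Rightarrow> real" where
  "LN mu \<Omega> m a = (\<Sum>\<beta>\<in>\<Omega>. \<Prod>i<m. if \<beta>!i then mu (a!i) else 1)"

lemma prod_indicator: "finite A \<Longrightarrow> (\<Prod>i\<in>A. if R i then 1 else 0 :: real) = (if \<forall>i\<in>A. R i then 1 else 0)"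
proof (cases "\<forall>i\<in>A. R i")
  case False
  assume "finite A"
  obtain i where "i \<in> A" "\<not> R i" using False by auto
  then show ?thesis using \<open>finite A\<close> by (auto intro!: prod_zero)
qed simp

lemma sum_indicator_unique:
  assumes "finite A" and uniq: "\<And>a b. a \<in> A \<Longrightarrow> b \<in> A \<Longrightarrow> Q a \<Longrightarrow> Q b \<Longrightarrow> a = b"
  shows "(\<Sum>a\<in>A. if Q a then 1 else 0 :: real) = (if \<exists>a\<in>A. Q a then 1 else 0)"
proof (cases "\<exists>a\<in>A. Q a")
  case True
  then obtain a where a: "a \<in> A" "Q a" by auto
  have "(\<Sum>a\<in>A. if Q a then 1 else 0 :: real) = (\<Sum>b\<in>A. if b = a then 1 else 0)"
    using uniq a by (intro sum.cong) auto
  then show ?thesis using a assms(1) True by simp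
qed simp

locale nepsbase =
  fixes G :: "nat \<Rightarrow> nat \<Rightarrow> bool" and K :: nat and p :: "nat \<Rightarrow> nat \<Rightarrow> nat \<Rightarrow> real" and mu :: "nat \<Rightarrow> real"
  assumes irr: "\<And>c. \<not> G c c"
    and peig: "\<And>c x w. c < K \<Longrightarrow> x < K \<Longrightarrow> w < K \<Longrightarrow>
       (\<Sum>z<K. (if G x z then 1 else 0) * p c z w) = mu c * p c x w"
    and pcompl: "\<And>x w. x < K \<Longrightarrow> w < K \<Longrightarrow> (\<Sum>c<K. p c x w) = (if x = w then 1 else 0)"
begin

lemma compl:
  assumes "x \<in> neps_verts K m" "w \<in> neps_verts K m"
  shows "(\<Sum>a\<in>neps_verts K m. PN p m a x w) = (if x = w then 1 else 0)"
proof -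
  have "(\<Sum>a\<in>neps_verts K m. PN p m a x w) = (\<Prod>i<m. \<Sum>c<K. p c (x!i) (w!i))"
    unfolding PN_def by (rule sum_prod_lists)
  also have "\<dots> = (\<Prod>i<m. if x!i = w!i then 1 else 0)"
    using assms by (intro prod.cong refl pcompl) (auto simp: neps_verts_def)
  also have "\<dots> = (if x = w then 1 else 0)"
    using assms by (subst prod_indicator) (auto simp: neps_verts_def intro: nth_equalityI)
  finally show ?thesis .
qed

lemma ind:
  assumes \<Omega>: "\<Omega> \<subseteq> {\<beta>. length \<beta> = m}" "finite \<Omega>"
    and z: "z \<in> neps_verts K m" and x: "x \<in> neps_verts K m"
  shows "(if neps_adj G \<Omega> x z then 1 else 0) =
    (\<Sum>\<beta>\<in>\<Omega>. \<Prod>i<m. if \<beta>!i then (if G (x!i) (z!i) then 1 else 0) else (if x!i = z!i then 1 else 0 :: real))"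
proof -
  define Q where "Q \<beta> \<longleftrightarrow> (\<forall>i<m. (\<not> \<beta> ! i \<longrightarrow> x ! i = z ! i) \<and> (\<beta> ! i \<longrightarrow> G (x ! i) (z ! i)))" for \<beta>
  have 1: "(\<Prod>i<m. if \<beta>!i then (if G (x!i) (z!i) then 1 else 0) else (if x!i = z!i then 1 else 0 :: real))
       = (if Q \<beta> then 1 else 0)" for \<beta>
  proof -
    have "(\<Prod>i<m. if \<beta>!i then (if G (x!i) (z!i) then 1 else 0) else (if x!i = z!i then 1 else 0 :: real))
      = (\<Prod>i<m. if (\<not> \<beta> ! i \<longrightarrow> x ! i = z ! i) \<and> (\<beta> ! i \<longrightarrow> G (x ! i) (z ! i)) then 1 else 0)"
      by (intro prod.cong) auto
    also have "\<dots> = (if Q \<beta> then 1 else 0)" by (subst prod_indicator) (auto simp: Q_def)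
    finally show ?thesis .
  qed
  have uniq: "a = b" if "a \<in> \<Omega>" "b \<in> \<Omega>" "Q a" "Q b" for a b
  proof (rule nth_equalityI)
    show "length a = length b" using that \<Omega> by auto
    fix i assume "i < length a"
    then have "i < m" using that \<Omega> by auto
    then show "a ! i = b ! i" using that irr unfolding Q_def by metis
  qed
  have "neps_adj G \<Omega> x z \<longleftrightarrow> (\<exists>\<beta>\<in>\<Omega>. Q \<beta>)"
    unfolding neps_adj_def Q_def using \<Omega> by auto
  then show ?thesis unfolding 1 by (simp add: sum_indicator_unique[OF \<Omega>(2) uniq])
qed

lemma eig:
  assumes \<Omega>: "\<Omega> \<subseteq> {\<beta>. length \<beta> = m}" "finite \<Omega>"
    and a: "a \<in> neps_verts K m" and x: "x \<in> neps_verts K m" and w: "w \<in> neps_verts K m"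
  shows "(\<Sum>z\<in>neps_verts K m. (if neps_adj G \<Omega> x z then 1 else 0) * PN p m a z w) = LN mu \<Omega> m a * PN p m a x w"
proof -
  define h where "h \<beta> i c = (if \<beta>!i then (if G (x!i) c then 1 else 0) else (if x!i = c then 1 else 0 :: real))" for \<beta> i c
  have "(\<Sum>z\<in>neps_verts K m. (if neps_adj G \<Omega> x z then 1 else 0) * PN p m a z w)
     = (\<Sum>z\<in>neps_verts K m. \<Sum>\<beta>\<in>\<Omega>. \<Prod>i<m. h \<beta> i (z!i) * p (a!i) (z!i) (w!i))"
    by (intro sum.cong refl, subst ind[OF \<Omega> _ x], assumption)
       (simp add: h_def PN_def sum_distrib_right prod.distrib)
  also have "\<dots> = (\<Sum>\<beta>\<in>\<Omega>. \<Prod>i<m. \<Sum>c<K. h \<beta> i c * p (a!i) c (w!i))"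
    by (subst sum.swap) (intro sum.cong refl sum_prod_lists)
  also have "\<dots> = (\<Sum>\<beta>\<in>\<Omega>. \<Prod>i<m. (if \<beta>!i then mu (a!i) else 1) * p (a!i) (x!i) (w!i))"
  proof (intro sum.cong prod.cong refl)
    fix \<beta> i assume "i \<in> {..<m}"
    then have lt: "a!i < K" "x!i < K" "w!i < K" using a x w by (auto simp: neps_verts_def)
    show "(\<Sum>c<K. h \<beta> i c * p (a!i) c (w!i)) = (if \<beta>!i then mu (a!i) else 1) * p (a!i) (x!i) (w!i)"
    proof (cases "\<beta>!i")
      case True then show ?thesis using peig[OF lt] by (simp add: h_def)
    next
      case False
      then have "(\<Sum>c<K. h \<beta> i c * p (a!i) c (w!i)) = (\<Sum>c<K. if c = x!i then p (a!i) (x!i) (w!i) else 0)"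
        by (intro sum.cong) (auto simp: h_def)
      then show ?thesis using False lt by simp
    qed
  qed
  also have "\<dots> = LN mu \<Omega> m a * PN p m a x w"
    by (simp add: LN_def PN_def prod.distrib sum_distrib_right)
  finally show ?thesis .
qed

end

lemma neps_irrefl:
  assumes "\<forall>\<beta>\<in>\<Omega>. \<exists>i<length \<beta>. \<beta>!i" "\<And>c. \<not> G c c"
  shows "\<not> neps_adj G \<Omega> x x"
  using assms unfolding neps_adj_def by blast



definition vec3 :: "nat \<Rightarrow> nat \<Rightarrow> real" where
  "vec3 c x = (if c = 0 then (if x = 1 then sqrt 2 / 2 else 1/2)
     else if c = 1 then (if x = 0 then sqrt 2 / 2 else if x = 2 then - sqrt 2 / 2 else 0)
     else (if x = 1 then - sqrt 2 / 2 else 1/2))"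

definition p3 :: "nat \<Rightarrow> nat \<Rightarrow> nat \<Rightarrow> real" where
  "p3 c x w = vec3 c x * vec3 c w"

definition e3 :: "nat \<Rightarrow> real" where
  "e3 c = (if c = 0 then 1 else if c = 1 then 0 else -1)"

definition mu3 :: "nat \<Rightarrow> real" where
  "mu3 c = sqrt 2 * e3 c"

definition p2 :: "nat \<Rightarrow> nat \<Rightarrow> nat \<Rightarrow> real" where
  "p2 c y w = (if c = 0 then 1/2 else if y = w then 1/2 else -1/2)"

definition mu2 :: "nat \<Rightarrow> real" where
  "mu2 c = (if c = 0 then 1 else -1)"

lemma lt3: "(x::nat) < 3 \<longleftrightarrow> x = 0 \<or> x = 1 \<or> x = 2" by auto
lemma lt2: "(x::nat) < 2 \<longleftrightarrow> x = 0 \<or> x = 1" by auto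
lemma lessThan3: "{..<3::nat} = {0,1,2}" by auto
lemma lessThan2: "{..<2::nat} = {0,1}" by auto

lemma vec3_eig: "c < 3 \<Longrightarrow> x < 3 \<Longrightarrow> (\<Sum>z<3. (if path_adj 3 x z then 1 else 0) * vec3 c z) = mu3 c * vec3 c x"
  unfolding lt3 lessThan3 by (elim disjE) (auto simp: path_adj_def vec3_def mu3_def e3_def)

interpretation P3b: nepsbase "path_adj 3" 3 p3 mu3
proof
  show "\<not> path_adj 3 c c" for c by (simp add: path_adj_def)
next
  fix c x w :: nat assume h: "c < 3" "x < 3" "w < 3"
  have "(\<Sum>z<3. (if path_adj 3 x z then 1 else 0) * p3 c z w) =
     (\<Sum>z<3. (if path_adj 3 x z then 1 else 0) * vec3 c z) * vec3 c w"
    unfolding p3_def sum_distrib_right by (intro sum.cong) auto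
  then show "(\<Sum>z<3. (if path_adj 3 x z then 1 else 0) * p3 c z w) = mu3 c * p3 c x w"
    using vec3_eig[OF h(1,2)] by (simp add: p3_def)
next
  fix x w :: nat assume "x < 3" "w < 3"
  then show "(\<Sum>c<3. p3 c x w) = (if x = w then 1 else 0)"
    unfolding lt3 lessThan3 by (elim disjE) (auto simp: p3_def vec3_def)
qed

interpretation P2b: nepsbase "path_adj 2" 2 p2 mu2
proof
  show "\<not> path_adj 2 c c" for c by (simp add: path_adj_def)
next
  fix c x w :: nat assume "c < 2" "x < 2" "w < 2"
  then show "(\<Sum>z<2. (if path_adj 2 x z then 1 else 0) * p2 c z w) = mu2 c * p2 c x w"
    unfolding lt2 lessThan2 by (elim disjE) (auto simp: path_adj_def p2_def mu2_def)
next
  fix x w :: nat assume "x < 2" "w < 2"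
  then show "(\<Sum>c<2. p2 c x w) = (if x = w then 1 else 0)"
    unfolding lt2 lessThan2 by (elim disjE) (auto simp: p2_def)
qed



lemma cart_spectral:
  fixes PA :: "'j \<Rightarrow> 'a \<Rightarrow> 'a \<Rightarrow> real" and PB :: "'k \<Rightarrow> 'b \<Rightarrow> 'b \<Rightarrow> real"
  assumes fin1: "finite V1" "finite J1" and fin2: "finite V2" "finite J2"
    and compl1: "\<And>x y. x \<in> V1 \<Longrightarrow> y \<in> V1 \<Longrightarrow> (\<Sum>j\<in>J1. PA j x y) = (if x = y then 1 else 0)"
    and eig1: "\<And>j x y. j \<in> J1 \<Longrightarrow> x \<in> V1 \<Longrightarrow> y \<in> V1 \<Longrightarrow>
        (\<Sum>z\<in>V1. (if E1 x z then 1 else 0) * PA j z y) = la j * PA j x y"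
    and compl2: "\<And>x y. x \<in> V2 \<Longrightarrow> y \<in> V2 \<Longrightarrow> (\<Sum>j\<in>J2. PB j x y) = (if x = y then 1 else 0)"
    and eig2: "\<And>j x y. j \<in> J2 \<Longrightarrow> x \<in> V2 \<Longrightarrow> y \<in> V2 \<Longrightarrow>
        (\<Sum>z\<in>V2. (if E2 x z then 1 else 0) * PB j z y) = lb j * PB j x y"
    and irr1: "\<And>x. \<not> E1 x x"
    and mem: "x \<in> V1" "x' \<in> V1" "y \<in> V2" "y' \<in> V2"
  shows "transition (V1 \<times> V2) (cart_adj E1 E2) t (x,y) (x',y') =
     (\<Sum>a\<in>J1. cis (- (t * la a)) * complex_of_real (PA a x x')) *
     (\<Sum>b\<in>J2. cis (- (t * lb b)) * complex_of_real (PB b y y'))"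
proof -
  define P where "P = (\<lambda>j (u::'a\<times>'b) v. PA (fst j) (fst u) (fst v) * PB (snd j) (snd u) (snd v))"
  define l where "l = (\<lambda>j. la (fst j) + lb (snd j))"
  have c: "(\<Sum>j\<in>J1\<times>J2. P j u v) = (if u = v then 1 else 0)" if "u \<in> V1 \<times> V2" "v \<in> V1 \<times> V2" for u v
  proof -
    obtain u1 u2 v1 v2 where uv: "u = (u1,u2)" "v = (v1,v2)" by (cases u, cases v)
    have "(\<Sum>j\<in>J1\<times>J2. P j u v) = (\<Sum>a\<in>J1. PA a u1 v1) * (\<Sum>b\<in>J2. PB b u2 v2)"
      by (simp add: P_def uv sum_product sum.cartesian_product case_prod_unfold)
    then show ?thesis using that uv compl1 compl2 by auto
  qed
  have e: "(\<Sum>z\<in>V1 \<times> V2. (if cart_adj E1 E2 u z then 1 else 0) * P j z v) = l j * P j u v"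
    if "j \<in> J1 \<times> J2" "u \<in> V1 \<times> V2" "v \<in> V1 \<times> V2" for j u v
  proof -
    obtain u1 u2 v1 v2 a b where uv: "u = (u1,u2)" "v = (v1,v2)" "j = (a,b)" by (cases u, cases v, cases j)
    have m: "u1 \<in> V1" "u2 \<in> V2" "v1 \<in> V1" "v2 \<in> V2" "a \<in> J1" "b \<in> J2" using that uv by auto
    have ind: "(if cart_adj E1 E2 u (z1,z2) then 1 else 0 :: real) =
        (if E1 u1 z1 then 1 else 0) * (if u2 = z2 then 1 else 0) + (if u1 = z1 then 1 else 0) * (if E2 u2 z2 then 1 else 0)" for z1 z2
      using irr1 by (auto simp: cart_adj_def uv)
    have "(\<Sum>z\<in>V1 \<times> V2. (if cart_adj E1 E2 u z then 1 else 0) * P j z v)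
      = (\<Sum>z1\<in>V1. \<Sum>z2\<in>V2. (if E1 u1 z1 then 1 else 0) * PA a z1 v1 * ((if u2 = z2 then 1 else 0) * PB b z2 v2))
        + (\<Sum>z1\<in>V1. \<Sum>z2\<in>V2. ((if u1 = z1 then 1 else 0) * PA a z1 v1) * ((if E2 u2 z2 then 1 else 0) * PB b z2 v2))"
    proof -
      define F where "F z1 z2 = (if E1 u1 z1 then 1 else 0) * PA a z1 v1 * ((if u2 = z2 then 1 else 0) * PB b z2 v2)
        + ((if u1 = z1 then 1 else 0) * PA a z1 v1) * ((if E2 u2 z2 then 1 else 0) * PB b z2 v2)" for z1 z2
      have pt: "(if cart_adj E1 E2 u z then 1 else 0) * P j z v = F (fst z) (snd z)" for z
      proof -
        obtain z1 z2 where "z = (z1,z2)" by (cases z)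
        then show ?thesis unfolding F_def P_def using ind[of z1 z2] uv by (simp add: algebra_simps)
      qed
      have "(\<Sum>z\<in>V1 \<times> V2. (if cart_adj E1 E2 u z then 1 else 0) * P j z v) = (\<Sum>z\<in>V1 \<times> V2. F (fst z) (snd z))"
        using pt by simp
      also have "\<dots> = (\<Sum>z1\<in>V1. \<Sum>z2\<in>V2. F z1 z2)"
        by (simp add: sum.cartesian_product case_prod_unfold)
      finally show ?thesis by (simp add: F_def sum.distrib)
    qed
    also have "\<dots> = (\<Sum>z1\<in>V1. (if E1 u1 z1 then 1 else 0) * PA a z1 v1) * PB b u2 v2
        + PA a u1 v1 * (\<Sum>z2\<in>V2. (if E2 u2 z2 then 1 else 0) * PB b z2 v2)"
    proof -
      have d1: "(\<Sum>z2\<in>V2. (if u2 = z2 then 1 else 0) * PB b z2 v2) = PB b u2 v2"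
        using m fin2 by (simp add: if_distrib[of "\<lambda>c. c * _"] cong: if_cong)
      have d2: "(\<Sum>z1\<in>V1. (if u1 = z1 then 1 else 0) * PA a z1 v1) = PA a u1 v1"
        using m fin1 by (simp add: if_distrib[of "\<lambda>c. c * _"] cong: if_cong)
      show ?thesis by (simp only: sum_product[symmetric] d1 d2)
    qed
    also have "\<dots> = l j * P j u v"
      using m by (simp only: eig1 eig2 uv P_def l_def fst_conv snd_conv) (simp add: algebra_simps)
    finally show ?thesis .
  qed
  have "transition (V1 \<times> V2) (cart_adj E1 E2) t (x,y) (x',y') =
     (\<Sum>j\<in>J1\<times>J2. cis (- (t * l j)) * complex_of_real (P j (x,y) (x',y')))"
    by (rule transition_spectral[where J="J1 \<times> J2" and P=P and lam=l, OF _ _ c e])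
       (use fin1 fin2 mem in auto)
  also have "\<dots> = (\<Sum>a\<in>J1. cis (- (t * la a)) * complex_of_real (PA a x x')) *
     (\<Sum>b\<in>J2. cis (- (t * lb b)) * complex_of_real (PB b y y'))"
    by (simp add: sum_product sum.cartesian_product P_def l_def distrib_left cis_mult[symmetric]
        mult_ac case_prod_unfold)
       (intro sum.cong refl, simp add: cis_mult)
  finally show ?thesis .
qed



lemma combine_pgst:
  fixes f g :: "real \<Rightarrow> complex"
  assumes cont: "isCont f 0" and f0: "f 0 = 1"
    and per: "\<And>t N. N \<in> \<int> \<Longrightarrow> f (t + q * N) = f t"
    and gm: "\<And>M. M \<in> \<int> \<Longrightarrow> cmod (g (c + p * M)) = 1"
    and q: "q > 0" and irr: "p / q \<notin> \<rat>" and e: "\<epsilon> > 0"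
  shows "\<exists>t. \<bar>cmod (f t * g t) - 1\<bar> < \<epsilon>"
proof -
  have "f \<midarrow>0\<rightarrow> 1" using cont f0 by (simp add: isCont_def)
  from LIM_D[OF this e] obtain \<delta> where d: "\<delta> > 0" "\<And>s. s \<noteq> 0 \<and> norm (s - 0) < \<delta> \<Longrightarrow> norm (f s - 1) < \<epsilon>"
    by blast
  have fd: "norm (f s - 1) < \<epsilon>" if "\<bar>s\<bar> < \<delta>" for s
    using d(2)[of s] that f0 e by (cases "s = 0") auto
  have dq: "\<delta>/q > 0" using d q by simp
  obtain h k :: int where "k > 0" and hk: "\<bar>of_int k * (p/q) - of_int h - (- c / q)\<bar> < \<delta> / q"
    using sequence_of_fractional_parts_is_dense[OF irr dq] by blast
  have "\<bar>c + p * k - q * h\<bar> = q * \<bar>of_int k * (p/q) - of_int h - (- c / q)\<bar>"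
    using q by (simp add: field_simps abs_mult[symmetric])
  also have "\<dots> < \<delta>" using hk q by (simp add: field_simps)
  finally have close: "\<bar>c + p * k - q * h\<bar> < \<delta>" .
  define t where "t = c + p * k"
  have "f t = f (c + p * k - q * h)"
    using per[of "of_int h" "c + p * k - q * h"] by (simp add: t_def)
  then have ft: "norm (f t - 1) < \<epsilon>" using fd[OF close] by simp
  have "cmod (f t * g t) = cmod (f t)" using gm[of "of_int k"] by (simp add: t_def norm_mult)
  moreover have "\<bar>cmod (f t) - 1\<bar> \<le> norm (f t - 1)"
    by (metis norm_one norm_triangle_ineq3)
  ultimately have "\<bar>cmod (f t * g t) - 1\<bar> < \<epsilon>" using ft by linarith
  then show ?thesis by blast
qed

lemma sqrt2_irrat: "sqrt 2 \<notin> \<rat>"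
proof
  assume "sqrt 2 \<in> \<rat>"
  then obtain m n :: nat
    where n: "n \<noteq> 0" and sqrt_rat: "\<bar>sqrt 2\<bar> = m / n" and "coprime m n" by (rule Rats_abs_nat_div_natE)
  have eq: "m\<^sup>2 = 2 * n\<^sup>2"
  proof -
    from n and sqrt_rat have "real m = \<bar>sqrt 2\<bar> * n" by simp
    then have "real (m\<^sup>2) = (sqrt 2)\<^sup>2 * real (n\<^sup>2)" by (simp add: power_mult_distrib)
    then have "real (m\<^sup>2) = real (2 * n\<^sup>2)" by simp
    then show ?thesis by (simp only: of_nat_eq_iff)
  qed
  have p: "prime (2::nat)" by simp
  have "2 dvd m \<and> 2 dvd n"
  proof
    from eq have "2 dvd m\<^sup>2" ..
    with p show "2 dvd m" by (rule prime_dvd_power)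
    then obtain k where "m = 2 * k" ..
    with eq have "2 * n\<^sup>2 = 2\<^sup>2 * k\<^sup>2" by algebra
    then have "n\<^sup>2 = 2 * k\<^sup>2" by (simp add: power2_eq_square)
    then have "2 dvd n\<^sup>2" ..
    with p show "2 dvd n" by (rule prime_dvd_power)
  qed
  then have "2 dvd gcd m n" by simp
  with \<open>coprime m n\<close> show False by simp
qed

lemma sqrt2_pow_odd_irrat:
  assumes "odd k" shows "1 / sqrt 2 ^ k \<notin> \<rat>"
proof
  assume h: "1 / sqrt 2 ^ k \<in> \<rat>"
  obtain r where k: "k = 2 * r + 1" using assms oddE by blast
  have "sqrt 2 ^ k = 2 ^ r * sqrt 2" by (simp add: k power_mult power_add)
  then have "sqrt 2 = 1 / (2 ^ r * (1 / sqrt 2 ^ k))" by (simp add: field_simps)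
  also have "\<dots> \<in> \<rat>"
  proof (rule Rats_divide[OF Rats_1 Rats_mult[OF _ h]])
    show "(2::real) ^ r \<in> \<rat>" by (rule Rats_power) simp
  qed
  finally show False using sqrt2_irrat by simp
qed



lemma prod_if_const: "finite A \<Longrightarrow> (\<Prod>x\<in>A. if P x then c else 1) = c ^ card {x\<in>A. P x}"
  by (simp add: prod.inter_filter[symmetric])

lemma cis_sum: "finite A \<Longrightarrow> cis (\<Sum>x\<in>A. f x) = (\<Prod>x\<in>A. cis (f x))"
  by (induction A rule: finite_induct) (auto simp: cis_mult[symmetric])

lemma cis_2pi_int: "k \<in> \<int> \<Longrightarrow> cis (x + 2 * pi * k) = cis x"
  by (simp add: cis_mult[symmetric])

lemma hamming_card: "length \<beta> = m \<Longrightarrow> card {i\<in>{..<m}. \<beta>!i} = hamming \<beta>"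
  unfolding hamming_def length_filter_conv_card by (auto intro: arg_cong[where f=card])

lemma term3:
  assumes "length \<beta> = m"
  shows "(\<Prod>i<m. if \<beta>!i then mu3 (a!i) else 1) = sqrt 2 ^ hamming \<beta> * (\<Prod>i<m. if \<beta>!i then e3 (a!i) else 1)"
proof -
  have "(\<Prod>i<m. if \<beta>!i then mu3 (a!i) else 1) = (\<Prod>i<m. (if \<beta>!i then sqrt 2 else 1) * (if \<beta>!i then e3 (a!i) else 1))"
    by (intro prod.cong) (auto simp: mu3_def)
  also have "\<dots> = sqrt 2 ^ hamming \<beta> * (\<Prod>i<m. if \<beta>!i then e3 (a!i) else 1)"
    by (simp only: prod.distrib prod_if_const[OF finite_lessThan] hamming_card[OF assms])
  finally show ?thesis .
qed

lemma e3_Ints: "e3 c \<in> \<int>" by (simp add: e3_def)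
lemma mu2_Ints: "mu2 c \<in> \<int>" by (simp add: mu2_def)

lemma sqrt2_pow_odd: "odd h \<Longrightarrow> sqrt 2 ^ h = sqrt 2 * 2 ^ ((h - 1) div 2)"
proof -
  assume "odd h"
  then obtain r where h: "h = 2 * r + 1" using oddE by blast
  then show ?thesis by (simp add: power_mult power_add)
qed

lemma LN3_sqrt2:
  assumes "\<Omega> \<subseteq> {\<beta>. length \<beta> = m}" "\<forall>\<beta>\<in>\<Omega>. odd (hamming \<beta>)"
  shows "\<exists>z\<in>\<int>. LN mu3 \<Omega> m a = sqrt 2 * z"
proof
  let ?z = "\<Sum>\<beta>\<in>\<Omega>. 2 ^ ((hamming \<beta> - 1) div 2) * (\<Prod>i<m. if \<beta>!i then e3 (a!i) else 1)"
  show "?z \<in> \<int>" by (intro Ints_sum Ints_mult Ints_prod Ints_power) (auto simp: e3_Ints)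
  show "LN mu3 \<Omega> m a = sqrt 2 * ?z"
    unfolding LN_def sum_distrib_left
    using assms by (intro sum.cong refl) (auto simp: term3 sqrt2_pow_odd)
qed

lemma LN2_int: "LN mu2 \<Omega> n b \<in> \<int>"
  unfolding LN_def by (intro Ints_sum Ints_prod) (auto simp: mu2_Ints)

definition T1 :: "bool list set \<Rightarrow> nat \<Rightarrow> real \<Rightarrow> nat list \<Rightarrow> nat list \<Rightarrow> complex" where
  "T1 \<Omega> m t x x' = (\<Sum>a\<in>neps_verts 3 m. cis (- (t * LN mu3 \<Omega> m a)) * complex_of_real (PN p3 m a x x'))"

definition T2 :: "bool list set \<Rightarrow> nat \<Rightarrow> real \<Rightarrow> nat list \<Rightarrow> nat list \<Rightarrow> complex" where
  "T2 \<Omega> n t y y' = (\<Sum>b\<in>neps_verts 2 n. cis (- (t * LN mu2 \<Omega> n b)) * complex_of_real (PN p2 n b y y'))"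

lemma T1_per:
  assumes "\<Omega> \<subseteq> {\<beta>. length \<beta> = m}" "\<forall>\<beta>\<in>\<Omega>. odd (hamming \<beta>)" "N \<in> \<int>"
  shows "T1 \<Omega> m (t + sqrt 2 * pi * N) x x' = T1 \<Omega> m t x x'"
  unfolding T1_def
proof (intro sum.cong refl arg_cong2[where f="(*)"])
  fix a
  obtain z where z: "z \<in> \<int>" "LN mu3 \<Omega> m a = sqrt 2 * z" using LN3_sqrt2[OF assms(1,2)] by blast
  have "- ((t + sqrt 2 * pi * N) * LN mu3 \<Omega> m a) = - (t * LN mu3 \<Omega> m a) + 2 * pi * (- (N * z))"
    by (simp add: z(2) algebra_simps)
  then show "cis (- ((t + sqrt 2 * pi * N) * LN mu3 \<Omega> m a)) = cis (- (t * LN mu3 \<Omega> m a))"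
    using z(1) assms(3) by (simp only: cis_2pi_int Ints_minus Ints_mult)
qed

lemma T2_per:
  assumes "N \<in> \<int>"
  shows "T2 \<Omega> n (t + 2 * pi * N) y y' = T2 \<Omega> n t y y'"
  unfolding T2_def
proof (intro sum.cong refl arg_cong2[where f="(*)"])
  fix b
  have "- ((t + 2 * pi * N) * LN mu2 \<Omega> n b) = - (t * LN mu2 \<Omega> n b) + 2 * pi * (- (N * LN mu2 \<Omega> n b))"
    by (simp add: algebra_simps)
  then show "cis (- ((t + 2 * pi * N) * LN mu2 \<Omega> n b)) = cis (- (t * LN mu2 \<Omega> n b))"
    using assms LN2_int by (simp only: cis_2pi_int Ints_minus Ints_mult)
qed

lemma T1_cont: "isCont (\<lambda>t. T1 \<Omega> m t x x') 0"
  unfolding T1_def cis_conv_exp by (intro continuous_intros)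

lemma T2_cont: "isCont (\<lambda>t. T2 \<Omega> n t y y') 0"
  unfolding T2_def cis_conv_exp by (intro continuous_intros)

lemma T1_0: "x \<in> neps_verts 3 m \<Longrightarrow> T1 \<Omega> m 0 x x = 1"
  unfolding T1_def using P3b.compl[of x m x] by (simp flip: of_real_sum)

lemma T2_0: "y \<in> neps_verts 2 n \<Longrightarrow> T2 \<Omega> n 0 y y = 1"
  unfolding T2_def using P2b.compl[of y n y] by (simp flip: of_real_sum)



lemma T2_caseA:
  assumes \<Omega>: "\<Omega> \<subseteq> {\<beta>. length \<beta> = n}" "finite \<Omega>" and M: "M \<in> \<int>"
  shows "cmod (T2 \<Omega> n (pi/2 + 2*pi*M) (replicate n 0)
            (map (\<lambda>j. if odd (card {\<beta>\<in>\<Omega>. \<beta>!j}) then 1 else 0) [0..<n])) = 1"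
proof -
  define d where "d j = card {\<beta>\<in>\<Omega>. \<beta>!j}" for j
  define y' where "y' = map (\<lambda>j. if odd (d j) then 1 else 0::nat) [0..<n]"
  define t where "t = pi/2 + 2*pi*M"
  define cb where "cb \<beta> b = (\<Prod>j<n. if \<beta>!j then mu2 (b!j) else 1)" for \<beta> and b :: "nat list"
  have cb_pm: "cb \<beta> b = 1 \<or> cb \<beta> b = -1" for \<beta> b
  proof -
    have "(cb \<beta> b)^2 = (\<Prod>j<n. (if \<beta>!j then mu2 (b!j) else 1)^2)"
      by (simp add: cb_def prod_power_distrib)
    also have "\<dots> = 1" by (intro prod.neutral) (auto simp: mu2_def)
    finally show ?thesis by (simp add: power2_eq_1_iff)
  qed
  have cis1: "cis (- (t * c)) = - \<i> * complex_of_real c" if "c = 1 \<or> c = -1" for c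
  proof -
    have a: "cis (-(pi/2) + 2 * pi * (-M)) = cis (-(pi/2))" using M by (intro cis_2pi_int) auto
    have b: "cis (pi/2 + 2 * pi * M) = cis (pi/2)" using M by (intro cis_2pi_int) auto
    show ?thesis using that a b by (auto simp: t_def algebra_simps)
  qed
  have cisb: "cis (- (t * LN mu2 \<Omega> n b)) = (- \<i>) ^ card \<Omega> * complex_of_real (\<Prod>j<n. mu2 (b!j) ^ d j)" for b
  proof -
    have "cis (- (t * LN mu2 \<Omega> n b)) = cis (\<Sum>\<beta>\<in>\<Omega>. - (t * cb \<beta> b))"
      by (simp add: LN_def cb_def sum_distrib_left sum_negf)
    also have "\<dots> = (\<Prod>\<beta>\<in>\<Omega>. - \<i> * complex_of_real (cb \<beta> b))"
      using \<Omega>(2) cis1 cb_pm by (simp add: cis_sum)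
    also have "\<dots> = (- \<i>) ^ card \<Omega> * complex_of_real (\<Prod>\<beta>\<in>\<Omega>. cb \<beta> b)"
      by (simp only: prod.distrib prod_constant of_real_prod)
    also have "(\<Prod>\<beta>\<in>\<Omega>. cb \<beta> b) = (\<Prod>j<n. \<Prod>\<beta>\<in>\<Omega>. if \<beta>!j then mu2 (b!j) else 1)"
      unfolding cb_def by (rule prod.swap)
    also have "\<dots> = (\<Prod>j<n. mu2 (b!j) ^ d j)"
      using \<Omega>(2) by (simp add: prod_if_const d_def)
    finally show ?thesis .
  qed
  have "T2 \<Omega> n t (replicate n 0) y' =
     (\<Sum>b\<in>neps_verts 2 n. (- \<i>) ^ card \<Omega> * complex_of_real (\<Prod>j<n. mu2 (b!j) ^ d j * p2 (b!j) 0 (y'!j)))"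
    unfolding T2_def cisb PN_def
    by (intro sum.cong refl) (simp add: prod.distrib)
  also have "\<dots> = (- \<i>) ^ card \<Omega> * complex_of_real (\<Prod>j<n. \<Sum>c<2. mu2 c ^ d j * p2 c 0 (y'!j))"
    using sum_prod_lists[where f="\<lambda>j c. mu2 c ^ d j * p2 c 0 (y'!j)" and k=2 and m=n]
    by (simp only: sum_distrib_left[symmetric] of_real_sum[symmetric])
  also have "(\<Prod>j<n. \<Sum>c<2. mu2 c ^ d j * p2 c 0 (y'!j)) = 1"
    by (intro prod.neutral) (auto simp: y'_def lessThan2 mu2_def p2_def)
  finally have "T2 \<Omega> n t (replicate n 0) y' = (- \<i>) ^ card \<Omega>" by simp
  then show ?thesis by (simp add: t_def y'_def d_def norm_power)
qed



lemma prod_pm1: "finite A \<Longrightarrow> (\<Prod>x\<in>A. if P x then -1 else 1 :: real) = (-1) ^ card {x\<in>A. P x}"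
  by (rule prod_if_const)

lemma cis_oddpi: "E = 1 \<or> E = -1 \<Longrightarrow> M \<in> \<int> \<Longrightarrow> cis (- (pi * (2 * M + 1) * E)) = -1"
proof -
  assume E: "E = 1 \<or> E = -1" and M: "M \<in> \<int>"
  show ?thesis
  proof (cases "E = 1")
    case True
    have "- (pi * (2 * M + 1) * E) = pi + 2 * pi * (- (M + 1))" using True by (simp add: algebra_simps)
    then show ?thesis using M by (simp only: cis_2pi_int Ints_minus Ints_add Ints_1 cis_pi)
  next
    case False
    then have "E = -1" using E by simp
    then have "- (pi * (2 * M + 1) * E) = pi + 2 * pi * M" by (simp add: algebra_simps)
    then show ?thesis using M by (simp only: cis_2pi_int cis_pi)
  qed
qed

lemma T1_caseB:
  assumes \<Omega>: "\<Omega> \<subseteq> {\<beta>. length \<beta> = m}" "finite \<Omega>" "\<Omega> \<noteq> {}" and odd: "\<forall>\<beta>\<in>\<Omega>. odd (hamming \<beta>)"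
    and k: "k = Min (hamming ` \<Omega>)" and j: "j < m"
    and oddj: "odd (card {\<beta>\<in>{\<beta>\<in>\<Omega>. hamming \<beta> = k}. \<beta>!j})" and M: "M \<in> \<int>"
  shows "cmod (T1 \<Omega> m (pi / sqrt 2 ^ k + 2 * (pi / sqrt 2 ^ k) * M) ((replicate m 1)[j:=0]) ((replicate m 1)[j:=2])) = 1"
proof -
  define x where "x = (replicate m 1)[j:=0::nat]"
  define x' where "x' = (replicate m 1)[j:=2::nat]"
  define t where "t = pi / sqrt 2 ^ k + 2 * (pi / sqrt 2 ^ k) * M"
  define \<Omega>s where "\<Omega>s = {\<beta>\<in>\<Omega>. hamming \<beta> = k}"
  define S where "S = ((-1::real) ^ card \<Omega>s)"
  define s where "s c = (if c = (1::nat) then - S else S)" for c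
  have kle: "k \<le> hamming \<beta>" if "\<beta> \<in> \<Omega>" for \<beta> using that \<Omega>(2) k by simp
  have "k \<in> hamming ` \<Omega>" unfolding k using \<Omega> by (intro Min_in) auto
  then have kodd: "odd k" using odd by auto
  have finS: "finite \<Omega>s" using \<Omega>(2) by (simp add: \<Omega>s_def)
  have step1: "cis (- (t * (\<Prod>i<m. if \<beta>!i then mu3 (a!i) else 1))) =
      complex_of_real (if hamming \<beta> = k \<and> \<not> (\<beta>!j \<and> a!j = 1) then -1 else 1)"
    if a: "a \<in> neps_verts 3 m" "\<forall>i<m. i \<noteq> j \<longrightarrow> a!i \<noteq> 1" and \<beta>: "\<beta> \<in> \<Omega>" for a \<beta>
  proof -
    define E where "E = (\<Prod>i<m. if \<beta>!i then e3 (a!i) else 1)"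
    define h where "h = hamming \<beta>"
    have len: "length \<beta> = m" using \<Omega>(1) \<beta> by auto
    have tm: "(\<Prod>i<m. if \<beta>!i then mu3 (a!i) else 1) = sqrt 2 ^ h * E"
      unfolding E_def h_def by (rule term3[OF len])
    show ?thesis
    proof (cases "\<beta>!j \<and> a!j = 1")
      case True
      then have "E = 0" unfolding E_def using j by (intro prod_zero) (auto simp: e3_def intro!: bexI[of _ j])
      then show ?thesis using True by (simp only: tm) simp
    next
      case False
      have "E^2 = (\<Prod>i<m. (if \<beta>!i then e3 (a!i) else 1)^2)"
        by (simp add: E_def prod_power_distrib)
      also have "\<dots> = 1"
      proof (intro prod.neutral ballI)
        fix i assume i: "i \<in> {..<m}"
        have "a!i < 3" using a(1) i by (auto simp: neps_verts_def)
        moreover have "\<beta>!i \<longrightarrow> a!i \<noteq> 1" using False a(2) i by (cases "i = j") auto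
        ultimately show "(if \<beta>!i then e3 (a!i) else 1)^2 = 1"
          by (auto simp: e3_def lt3)
      qed
      finally have E: "E = 1 \<or> E = -1" by (simp add: power2_eq_1_iff)
      have "odd h" using odd \<beta> by (simp add: h_def)
      have "even (h - k)" using \<open>odd h\<close> kodd kle[OF \<beta>] unfolding h_def by presburger
      then obtain r where "h - k = 2 * r" by (rule evenE)
      then have hr: "h = k + 2 * r" using kle[OF \<beta>] unfolding h_def by arith
      have sq: "sqrt 2 ^ h = sqrt 2 ^ k * 2 ^ r" by (simp add: hr power_add power_mult)
      have tt: "t * (sqrt 2 ^ h * E) = pi * (2 * M + 1) * 2 ^ r * E"
        by (simp add: t_def sq field_simps)
      show ?thesis
      proof (cases "r = 0")
        case True
        then have "t * (sqrt 2 ^ h * E) = pi * (2 * M + 1) * E" using tt by simp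
        then have "cis (- (t * (sqrt 2 ^ h * E))) = -1" using cis_oddpi[OF E M] by (simp only:)
        then show ?thesis using False tm hr True by (simp add: h_def)
      next
        case r: False
        then obtain r' where r': "r = Suc r'" by (cases r) auto
        have "- (t * (sqrt 2 ^ h * E)) = 0 + 2 * pi * (- ((2 * M + 1) * 2 ^ r' * E))"
          unfolding tt r' by (simp add: algebra_simps)
        moreover have "(- ((2 * M + 1) * 2 ^ r' * E)) \<in> \<int>" using E M by auto
        ultimately have "cis (- (t * (sqrt 2 ^ h * E))) = 1" by (simp only: cis_2pi_int cis_zero)
        moreover have "hamming \<beta> \<noteq> k" using hr r by (simp add: h_def)
        ultimately show ?thesis using tm by simp
      qed
    qed
  qed
  have step2: "cis (- (t * LN mu3 \<Omega> m a)) = complex_of_real (s (a!j))"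
    if a: "a \<in> neps_verts 3 m" "\<forall>i<m. i \<noteq> j \<longrightarrow> a!i \<noteq> 1" for a
  proof -
    have "cis (- (t * LN mu3 \<Omega> m a)) = cis (\<Sum>\<beta>\<in>\<Omega>. - (t * (\<Prod>i<m. if \<beta>!i then mu3 (a!i) else 1)))"
      by (simp add: LN_def sum_distrib_left sum_negf)
    also have "\<dots> = (\<Prod>\<beta>\<in>\<Omega>. complex_of_real (if hamming \<beta> = k \<and> \<not> (\<beta>!j \<and> a!j = 1) then -1 else 1))"
      using \<Omega>(2) step1[OF a] by (simp add: cis_sum)
    also have "\<dots> = complex_of_real ((-1) ^ card {\<beta>\<in>\<Omega>. hamming \<beta> = k \<and> \<not> (\<beta>!j \<and> a!j = 1)})"
      by (simp only: of_real_prod[symmetric] prod_pm1[OF \<Omega>(2)])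
    also have "(-1::real) ^ card {\<beta>\<in>\<Omega>. hamming \<beta> = k \<and> \<not> (\<beta>!j \<and> a!j = 1)} = s (a!j)"
    proof (cases "a!j = 1")
      case False
      then have "{\<beta>\<in>\<Omega>. hamming \<beta> = k \<and> \<not> (\<beta>!j \<and> a!j = 1)} = \<Omega>s" by (auto simp: \<Omega>s_def)
      then show ?thesis using False by (simp add: s_def S_def)
    next
      case True
      then have eq: "{\<beta>\<in>\<Omega>. hamming \<beta> = k \<and> \<not> (\<beta>!j \<and> a!j = 1)} = {\<beta>\<in>\<Omega>s. \<not> \<beta>!j}" by (auto simp: \<Omega>s_def)
      have "card \<Omega>s = card {\<beta>\<in>\<Omega>s. \<beta>!j} + card {\<beta>\<in>\<Omega>s. \<not> \<beta>!j}"
      proof -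
        have "\<Omega>s = {\<beta>\<in>\<Omega>s. \<beta>!j} \<union> {\<beta>\<in>\<Omega>s. \<not> \<beta>!j}" by auto
        then have "card \<Omega>s = card ({\<beta>\<in>\<Omega>s. \<beta>!j} \<union> {\<beta>\<in>\<Omega>s. \<not> \<beta>!j})" by simp
        also have "\<dots> = card {\<beta>\<in>\<Omega>s. \<beta>!j} + card {\<beta>\<in>\<Omega>s. \<not> \<beta>!j}"
          using finS by (intro card_Un_disjoint) auto
        finally show ?thesis .
      qed
      then have "S = - ((-1) ^ card {\<beta>\<in>\<Omega>s. \<not> \<beta>!j})"
        using oddj by (simp add: S_def power_add \<Omega>s_def)
      then show ?thesis using True eq by (simp add: s_def)
    qed
    finally show ?thesis .
  qed
  have p3_111: "p3 1 1 1 = 0" by (simp add: p3_def vec3_def)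
  have step3: "cis (- (t * LN mu3 \<Omega> m a)) * complex_of_real (PN p3 m a x x') =
      complex_of_real (\<Prod>i<m. (if i = j then s (a!i) else 1) * p3 (a!i) (x!i) (x'!i))"
    if a: "a \<in> neps_verts 3 m" for a
  proof (cases "\<forall>i<m. i \<noteq> j \<longrightarrow> a!i \<noteq> 1")
    case True
    then show ?thesis using step2[OF a True] j
      by (simp add: PN_def prod.distrib prod.delta of_real_mult)
  next
    case False
    then obtain i where i: "i < m" "i \<noteq> j" "a!i = 1" by auto
    have z1: "PN p3 m a x x' = 0" unfolding PN_def using i
      by (intro prod_zero) (auto simp: x_def x'_def p3_def vec3_def intro!: bexI[of _ i])
    have z2: "(\<Prod>i<m. (if i = j then s (a!i) else 1) * p3 (a!i) (x!i) (x'!i)) = 0" using i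
      by (intro prod_zero) (auto simp: x_def x'_def p3_def vec3_def intro!: bexI[of _ i])
    show ?thesis by (simp add: z1 z2)
  qed
  have "T1 \<Omega> m t x x' = complex_of_real (\<Sum>a\<in>neps_verts 3 m. \<Prod>i<m. (if i = j then s (a!i) else 1) * p3 (a!i) (x!i) (x'!i))"
    unfolding T1_def of_real_sum by (intro sum.cong refl step3)
  also have "(\<Sum>a\<in>neps_verts 3 m. \<Prod>i<m. (if i = j then s (a!i) else 1) * p3 (a!i) (x!i) (x'!i))
      = (\<Prod>i<m. \<Sum>c<3. (if i = j then s c else 1) * p3 c (x!i) (x'!i))"
    by (rule sum_prod_lists)
  also have "\<dots> = (\<Prod>i<m. if i = j then S else 1)"
  proof (intro prod.cong refl)
    fix i assume "i \<in> {..<m}"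
    then show "(\<Sum>c<3. (if i = j then s c else 1) * p3 c (x!i) (x'!i)) = (if i = j then S else 1)"
      by (cases "i = j") (auto simp: x_def x'_def lessThan3 s_def p3_def vec3_def)
  qed
  also have "\<dots> = S" using j by (simp add: prod.delta)
  finally have "T1 \<Omega> m t x x' = complex_of_real S" .
  moreover have "\<bar>S\<bar> = 1" by (simp add: S_def)
  ultimately show ?thesis by (simp add: t_def x_def x'_def)
qed



lemma z2_sum_nz: "z2_sum m S \<noteq> z2_zero m \<Longrightarrow> \<exists>j<m. odd (card {\<beta>\<in>S. \<beta>!j})"
proof (rule ccontr)
  assume h: "z2_sum m S \<noteq> z2_zero m" "\<not> (\<exists>j<m. odd (card {\<beta>\<in>S. \<beta>!j}))"
  have "z2_sum m S = z2_zero m"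
    unfolding z2_sum_def z2_zero_def by (rule nth_equalityI) (use h(2) in auto)
  then show False using h(1) by simp
qed

lemma finite_len: "finite {\<beta>::bool list. length \<beta> = m}"
  using finite_lists_length_eq[of "UNIV::bool set" m] by simp

lemma nonzero_ex:
  assumes "\<beta> \<in> {\<beta>. length \<beta> = m} - {z2_zero m}" shows "\<exists>i<length \<beta>. \<beta>!i"
proof (rule ccontr)
  assume "\<not> (\<exists>i<length \<beta>. \<beta>!i)"
  then have "\<beta> = z2_zero m" using assms unfolding z2_zero_def by (intro nth_equalityI) auto
  then show False using assms by simp
qed

theorem corollary4p4:
  fixes m n :: nat and \<Omega> \<Omega>' :: "bool list set"
  assumes "\<Omega> \<subseteq> {\<beta>. length \<beta> = m} - {z2_zero m}" and "\<Omega> \<noteq> {}"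
    and "\<forall>\<beta>\<in>\<Omega>. odd (hamming \<beta>)"
    and "\<Omega>' \<subseteq> {\<beta>. length \<beta> = n} - {z2_zero n}" and "\<Omega>' \<noteq> {}"
    and "z2_sum m {\<beta>\<in>\<Omega>. hamming \<beta> = Min (hamming ` \<Omega>)} \<noteq> z2_zero m
         \<or> z2_sum n \<Omega>' \<noteq> z2_zero n"
  shows "\<exists>u v. u \<in> neps_verts 3 m \<times> neps_verts 2 n \<and> v \<in> neps_verts 3 m \<times> neps_verts 2 n \<and> u \<noteq> v \<and>
           pgst (neps_verts 3 m \<times> neps_verts 2 n)
                (cart_adj (neps_adj (path_adj 3) \<Omega>) (neps_adj (path_adj 2) \<Omega>')) u v"
proof -
  have len1: "\<Omega> \<subseteq> {\<beta>. length \<beta> = m}" and len2: "\<Omega>' \<subseteq> {\<beta>. length \<beta> = n}" using assms(1,4) by auto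
  have fin1: "finite \<Omega>" using len1 finite_len finite_subset by blast
  have fin2: "finite \<Omega>'" using len2 finite_len finite_subset by blast
  have irr1: "\<not> neps_adj (path_adj 3) \<Omega> z z" for z
    by (rule neps_irrefl) (use assms(1) nonzero_ex in \<open>auto simp: path_adj_def\<close>)
  let ?V = "neps_verts 3 m \<times> neps_verts 2 n"
  let ?E = "cart_adj (neps_adj (path_adj 3) \<Omega>) (neps_adj (path_adj 2) \<Omega>')"
  have tr: "transition ?V ?E t (x,y) (x',y') = T1 \<Omega> m t x x' * T2 \<Omega>' n t y y'"
    if "x \<in> neps_verts 3 m" "x' \<in> neps_verts 3 m" "y \<in> neps_verts 2 n" "y' \<in> neps_verts 2 n" for t x x' y y'
    unfolding T1_def T2_def
    by (rule cart_spectral[where PA="PN p3 m" and PB="PN p2 n" and la="LN mu3 \<Omega> m" and lb="LN mu2 \<Omega>' n"])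
       (use that in \<open>auto simp: finite_neps_verts irr1 simp: P3b.compl P2b.compl intro: P3b.eig[OF len1 fin1] P2b.eig[OF len2 fin2]\<close>)
  from assms(6) show ?thesis
  proof
    assume h: "z2_sum n \<Omega>' \<noteq> z2_zero n"
    then obtain jj where jj: "jj < n" "odd (card {\<beta>\<in>\<Omega>'. \<beta>!jj})" using z2_sum_nz by blast
    define x0 where "x0 = replicate m (1::nat)"
    define y0 where "y0 = replicate n (0::nat)"
    define y' where "y' = map (\<lambda>j. if odd (card {\<beta>\<in>\<Omega>'. \<beta>!j}) then 1 else 0::nat) [0..<n]"
    have mem: "x0 \<in> neps_verts 3 m" "y0 \<in> neps_verts 2 n" "y' \<in> neps_verts 2 n"
      by (auto simp: neps_verts_def x0_def y0_def y'_def)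
    have ne: "(x0, y0) \<noteq> (x0, y')"
    proof
      assume "(x0, y0) = (x0, y')"
      then have "y0 ! jj = y' ! jj" by simp
      then show False using jj by (simp add: y0_def y'_def)
    qed
    have "pgst ?V ?E (x0,y0) (x0,y')"
      unfolding pgst_def
    proof (intro allI impI)
      fix \<epsilon> :: real assume e: "\<epsilon> > 0"
      have "\<exists>t. \<bar>cmod (T1 \<Omega> m t x0 x0 * T2 \<Omega>' n t y0 y') - 1\<bar> < \<epsilon>"
      proof (rule combine_pgst[where q="sqrt 2 * pi" and p="2 * pi" and c="pi/2"])
        show "isCont (\<lambda>t. T1 \<Omega> m t x0 x0) 0" by (rule T1_cont)
        show "T1 \<Omega> m 0 x0 x0 = 1" using mem(1) by (rule T1_0)
        show "T1 \<Omega> m (t + sqrt 2 * pi * N) x0 x0 = T1 \<Omega> m t x0 x0" if "N \<in> \<int>" for t N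
          using T1_per[OF len1 assms(3) that] .
        show "cmod (T2 \<Omega>' n (pi / 2 + 2 * pi * M) y0 y') = 1" if "M \<in> \<int>" for M
          unfolding y0_def y'_def using T2_caseA[OF len2 fin2 that] .
        show "sqrt 2 * pi > 0" by simp
        have "2 * pi / (sqrt 2 * pi) = sqrt 2"
          by (simp add: field_simps)
        then show "2 * pi / (sqrt 2 * pi) \<notin> \<rat>" using sqrt2_irrat by simp
      qed (rule e)
      then show "\<exists>t. \<bar>cmod (transition ?V ?E t (x0,y0) (x0,y')) - 1\<bar> < \<epsilon>"
        using tr[OF mem(1) mem(1) mem(2) mem(3)] by simp
    qed
    then show ?thesis using mem ne by blast
  next
    assume h: "z2_sum m {\<beta>\<in>\<Omega>. hamming \<beta> = Min (hamming ` \<Omega>)} \<noteq> z2_zero m"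
    define k where "k = Min (hamming ` \<Omega>)"
    obtain j where j: "j < m" "odd (card {\<beta>\<in>{\<beta>\<in>\<Omega>. hamming \<beta> = k}. \<beta>!j})"
      using z2_sum_nz[OF h] unfolding k_def by blast
    define x where "x = (replicate m 1)[j:=0::nat]"
    define x' where "x' = (replicate m 1)[j:=2::nat]"
    define y0 where "y0 = replicate n (0::nat)"
    have mem: "x \<in> neps_verts 3 m" "x' \<in> neps_verts 3 m" "y0 \<in> neps_verts 2 n"
      by (auto simp: neps_verts_def x_def x'_def y0_def dest: set_update_subset_insert[THEN subsetD])
    have ne: "(x, y0) \<noteq> (x', y0)"
    proof
      assume "(x, y0) = (x', y0)"
      then have "x ! j = x' ! j" by simp
      then show False using j by (simp add: x_def x'_def)
    qed
    define \<tau> where "\<tau> = pi / sqrt 2 ^ k"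
    have "pgst ?V ?E (x,y0) (x',y0)"
      unfolding pgst_def
    proof (intro allI impI)
      fix \<epsilon> :: real assume e: "\<epsilon> > 0"
      have "\<exists>t. \<bar>cmod (T2 \<Omega>' n t y0 y0 * T1 \<Omega> m t x x') - 1\<bar> < \<epsilon>"
      proof (rule combine_pgst[where q="2 * pi" and p="2 * \<tau>" and c="\<tau>"])
        show "isCont (\<lambda>t. T2 \<Omega>' n t y0 y0) 0" by (rule T2_cont)
        show "T2 \<Omega>' n 0 y0 y0 = 1" using mem(3) by (rule T2_0)
        show "T2 \<Omega>' n (t + 2 * pi * N) y0 y0 = T2 \<Omega>' n t y0 y0" if "N \<in> \<int>" for t N
          using T2_per[OF that] .
        show "cmod (T1 \<Omega> m (\<tau> + 2 * \<tau> * M) x x') = 1" if "M \<in> \<int>" for M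
          unfolding \<tau>_def x_def x'_def
          using T1_caseB[OF len1 fin1 assms(2) assms(3) k_def j that] .
        show "2 * pi > 0" by simp
        have "2 * \<tau> / (2 * pi) = 1 / sqrt 2 ^ k" by (simp add: \<tau>_def)
        moreover have "odd k"
        proof -
          have "k \<in> hamming ` \<Omega>" unfolding k_def using fin1 assms(2) by (intro Min_in) auto
          then show ?thesis using assms(3) by auto
        qed
        ultimately show "2 * \<tau> / (2 * pi) \<notin> \<rat>" using sqrt2_pow_odd_irrat by simp
      qed (rule e)
      then show "\<exists>t. \<bar>cmod (transition ?V ?E t (x,y0) (x',y0)) - 1\<bar> < \<epsilon>"
        using tr[OF mem(1) mem(2) mem(3) mem(3)] by (simp add: mult.commute)
    qed
    then show ?thesis using mem ne by blast
  qed
qed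


end
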